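(* Consider the problem \[ \min_{\hat{\mathbf W}\in\mathbb{R}^{(p+1)\times q},\ \mathbf z\in\mathbb{R}^m}\ f(\hat{\mathbf W},\mathbf z):=\tfrac12\langle \hat{\mathbf W},\hat{\mathbf W}\rangle+\beta\|\mathbf z_+\|_0 \quad\text{s.t.}\quad \mathbf 1+\mathscr A(\hat{\mathbf W})=\mathbf z,\ \ \operatorname{rank}(\hat{\mathbf W})\le r, \] where $\beta>0$, $r<\min\{p+1,q\}$ is a positive integer, $\mathbf A_1,\dots,\mathbf A_m\in\mathbb{R}^{(p+1)\times q}$ are given, and $\mathscr A(\hat{\mathbf W})=(\langle \mathbf A_1,\hat{\mathbf W}\rangle,\dots,\langle \mathbf A_m,\hat{\mathbf W}\rangle)^\top$. Let $(\hat{\mathbf W},\mathbf z)$ be a local minimizer of this problem and suppose the constraint qualification below (Assumption 1) holds at $\hat{\mathbf W}$. Then $(\hat{\mathbf W},\mathbf z)$ is a KKT point of the problem.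
   Context: Notation: $\langle \mathbf W,\mathbf Y\rangle=\operatorname{tr}(\mathbf W^\top\mathbf Y)$; $\mathbf 1\in\mathbb{R}^m$ is the all-ones vector; for $\mathbf z\in\mathbb{R}^m$, $\mathbf z_+$ is the componentwise positive part and $\|\mathbf z_+\|_0$ is the number of strictly positive entries of $\mathbf z$. The adjoint is $\mathscr A^*(\boldsymbol\lambda)=\sum_{i=1}^m \lambda_i\mathbf A_i$. Sets: $\mathcal L=\{(\hat{\mathbf W},\mathbf z): \mathbf 1+\mathscr A(\hat{\mathbf W})=\mathbf z\}$, $\mathcal R=\{\hat{\mathbf W}:\operatorname{rank}(\hat{\mathbf W})\le r\}$, feasible set $\mathcal F=\mathcal L\cap\mathcal R$ (viewed in $\mathbb{R}^{(p+1)\times q}\times\mathbb{R}^m$). For a set $C$ and $x\in C$, $\mathrm N_C(x)$ is the regular (Fréchet) normal cone $\{v:\limsup_{x'\to x,\,x'\in C,\,x'\neq x}\langle v,x'-x\rangle/\|x'-x\|\le 0\}$. Lagrangian: $\mathscr L(\hat{\mathbf W},\mathbf z,\boldsymbol\lambda)=\tfrac12\langle\hat{\mathbf W},\hat{\mathbf W}\rangle+\beta\|\mathbf z_+\|_0+\langle\boldsymbol\lambda,\mathbf 1+\mathscr A(\hat{\mathbf W})-\mathbf z\rangle$, with $\nabla_{\hat{\mathbf W}}\mathscr L=\hat{\mathbf W}+\mathscr A^*(\boldsymbol\lambda)$ and $\partial_{\mathbf z}\mathscr L=\beta\,\partial\|\mathbf z_+\|_0-\boldsymbol\lambda$, where the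 regular subdifferential is $\partial\|\mathbf z_+\|_0=\{\mathbf d\in\mathbb{R}^m: d_i=0 \text{ if } z_i\neq0,\ d_i\ge 0 \text{ if } z_i=0\}$. KKT point: $(\hat{\mathbf W},\mathbf z)$ is a KKT point if there exists $\boldsymbol\lambda\in\mathbb{R}^m$ such that $-\partial_{(\hat{\mathbf W},\mathbf z)}\mathscr L(\hat{\mathbf W},\mathbf z,\boldsymbol\lambda)\in \mathrm N_{\mathcal F}(\hat{\mathbf W},\mathbf z)$ (i.e., some element of the partial subdifferential of $\mathscr L$ in $(\hat{\mathbf W},\mathbf z)$ has its negative in the normal cone), $\operatorname{rank}(\hat{\mathbf W})\le r$, and $\mathbf 1+\mathscr A(\hat{\mathbf W})-\mathbf z=0$. Assumption 1 at $\hat{\mathbf W}$: let $s=\operatorname{rank}(\hat{\mathbf W})$ and $\hat{\mathbf W}=\mathbf U\Sigma\mathbf V^\top$ be an SVD with $\mathbf U$, $\mathbf V$ orthogonal of sizes $p+1$, $q$; let $\Gamma$ be the index set of nonzero singular values, $\Gamma_p^\perp=\{1,\dots,p+1\}\setminus\Gamma$, $\Gamma_q^\perp=\{1,\dots,q\}\setminus\Gamma$, and $\mathbf U_J$, $\mathbf V_J$ the column submatrices indexed by $J$. Define $\mathbf T^i=\begin{bmatrix}\mathbf U_\Gamma^\top\mathbf A_i\mathbf V_\Gamma & \mathbf U_\Gamma^\top\mathbf A_i\mathbf V_{\Gamma_q^\perp}\\ \mathbf U_{\Gamma_p^\perp}^\top\mathbf A_i\mathbf V_\Gamma & \mathbf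 O\end{bmatrix}$ and $\mathbf R^i=\mathbf U^\top\mathbf A_i\mathbf V_\Gamma$, $i=1,\dots,m$. The assumption is: if $s=r$, the matrices $\mathbf T^1,\dots,\mathbf T^m$ are linearly independent; if $s<r$, the matrices $\mathbf R^1,\dots,\mathbf R^m$ are linearly independent. *)

theory Defs
  imports "HOL-Analysis.Analysis"
begin

text \<open>Matrices in R^((p+1) x q) are rendered as real^'q^'p (rows indexed by the finite type 'p with
CARD('p) = p+1, columns by 'q with CARD('q) = q); vectors in R^m as real^'m.
The Frobenius inner product tr(W^T Y) is the library inner product W \<bullet> Y on real^'q^'p.\<close>

definition opA :: "('m::finite \<Rightarrow> real^'q::finite^'p::finite) \<Rightarrow> real^'q^'p \<Rightarrow> real^'m" where
  "opA A W = (\<chi> i. A i \<bullet> W)"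

definition opA_adj :: "('m::finite \<Rightarrow> real^'q::finite^'p::finite) \<Rightarrow> real^'m \<Rightarrow> real^'q^'p" where
  "opA_adj A lam = (\<Sum>i\<in>UNIV. (lam $ i) *\<^sub>R A i)"

definition ones :: "real^'m::finite" where
  "ones = (\<chi> i. 1)"

definition pos_l0 :: "real^'m::finite \<Rightarrow> nat" where
  "pos_l0 z = card {i. z $ i > 0}"

definition objf :: "real \<Rightarrow> real^'q::finite^'p::finite \<Rightarrow> real^'m::finite \<Rightarrow> real" where
  "objf \<beta> W z = (1/2) * (W \<bullet> W) + \<beta> * real (pos_l0 z)"

definition feas_set :: "('m::finite \<Rightarrow> real^'q::finite^'p::finite) \<Rightarrow> nat \<Rightarrow> ((real^'q^'p) \<times> (real^'m)) set" where
  "feas_set A r = {(W, z). ones + opA A W = z \<and> rank W \<le> r}"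

definition local_minimizer ::
  "real \<Rightarrow> ('m::finite \<Rightarrow> real^'q::finite^'p::finite) \<Rightarrow> nat \<Rightarrow> real^'q^'p \<Rightarrow> real^'m \<Rightarrow> bool" where
  "local_minimizer \<beta> A r W z \<longleftrightarrow> (W, z) \<in> feas_set A r \<and>
     (\<exists>e>0. \<forall>W' z'. (W', z') \<in> feas_set A r \<and> dist (W', z') (W, z) < e \<longrightarrow>
        objf \<beta> W z \<le> objf \<beta> W' z')"

text \<open>Regular (Frechet) normal cone, with the limsup condition written out:
 limsup_{x' \<rightarrow> x, x' \<in> C, x' \<noteq> x} <v, x'-x>/||x'-x|| \<le> 0.\<close>
definition reg_normal_cone :: "'a::real_inner set \<Rightarrow> 'a \<Rightarrow> 'a set" where
  "reg_normal_cone C x = {v. \<forall>\<epsilon>>0. \<exists>\<delta>>0. \<forall>x'\<in>C. x' \<noteq> x \<and> dist x' x < \<delta> \<longrightarrow>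
      inner v (x' - x) / norm (x' - x) \<le> \<epsilon>}"

definition subdiff_pos_l0 :: "real^'m::finite \<Rightarrow> (real^'m) set" where
  "subdiff_pos_l0 z = {d. \<forall>i. (z $ i \<noteq> 0 \<longrightarrow> d $ i = 0) \<and> (z $ i = 0 \<longrightarrow> d $ i \<ge> 0)}"

definition KKT_point ::
  "real \<Rightarrow> ('m::finite \<Rightarrow> real^'q::finite^'p::finite) \<Rightarrow> nat \<Rightarrow> real^'q^'p \<Rightarrow> real^'m \<Rightarrow> bool" where
  "KKT_point \<beta> A r W z \<longleftrightarrow>
     (\<exists>lam::real^'m. \<exists>d \<in> subdiff_pos_l0 z.
        - (W + opA_adj A lam, \<beta> *\<^sub>R d - lam) \<in> reg_normal_cone (feas_set A r) (W, z))
     \<and> rank W \<le> r \<and> ones + opA A W - z = 0"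

definition lin_indep_family :: "('i::finite \<Rightarrow> 'v::real_vector) \<Rightarrow> bool" where
  "lin_indep_family T \<longleftrightarrow> (\<forall>c::'i \<Rightarrow> real. (\<Sum>i\<in>UNIV. c i *\<^sub>R T i) = 0 \<longrightarrow> (\<forall>i. c i = 0))"

text \<open>Middle factor of an SVD, up to a simultaneous reordering of the columns of U and V:
 nonnegative entries and at most one nonzero entry in every row and every column.\<close>
definition svd_middle :: "real^'q::finite^'p::finite \<Rightarrow> bool" where
  "svd_middle S \<longleftrightarrow> (\<forall>a b. S $ a $ b \<ge> 0) \<and>
     (\<forall>a b b'. S $ a $ b \<noteq> 0 \<and> S $ a $ b' \<noteq> 0 \<longrightarrow> b = b') \<and>
     (\<forall>a a' b. S $ a $ b \<noteq> 0 \<and> S $ a' $ b \<noteq> 0 \<longrightarrow> a = a')"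

definition is_svd :: "real^'q::finite^'p::finite \<Rightarrow> real^'p^'p \<Rightarrow> real^'q^'p \<Rightarrow> real^'q^'q \<Rightarrow> bool" where
  "is_svd W U S V \<longleftrightarrow> orthogonal_matrix U \<and> orthogonal_matrix V \<and> svd_middle S \<and>
     W = U ** S ** transpose V"

definition Gam_p :: "real^'q::finite^'p::finite \<Rightarrow> 'p set" where
  "Gam_p S = {a. \<exists>b. S $ a $ b \<noteq> 0}"
definition Gam_q :: "real^'q::finite^'p::finite \<Rightarrow> 'q set" where
  "Gam_q S = {b. \<exists>a. S $ a $ b \<noteq> 0}"

text \<open>T^i (entries of U^T A_i V, with the block (Gamma_p-perp, Gamma_q-perp) set to O) and
 R^i = U^T A_i V_Gamma (columns of U^T A_i V indexed by Gamma), up to the ordering of rows/columns.\<close>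
definition Tmat :: "real^'p::finite^'p \<Rightarrow> real^'q::finite^'p \<Rightarrow> real^'q^'q \<Rightarrow> real^'q^'p \<Rightarrow> real^'q^'p" where
  "Tmat U S V Ai = (\<chi> a b. if a \<in> Gam_p S \<or> b \<in> Gam_q S
        then (transpose U ** Ai ** V) $ a $ b else 0)"
definition Rmat :: "real^'p::finite^'p \<Rightarrow> real^'q::finite^'p \<Rightarrow> real^'q^'q \<Rightarrow> real^'q^'p \<Rightarrow> real^'q^'p" where
  "Rmat U S V Ai = (\<chi> a b. if b \<in> Gam_q S then (transpose U ** Ai ** V) $ a $ b else 0)"

definition assumption1 :: "('m::finite \<Rightarrow> real^'q::finite^'p::finite) \<Rightarrow> nat \<Rightarrow> real^'q^'p \<Rightarrow> bool" where
  "assumption1 A r W \<longleftrightarrow> (\<exists>U S V. is_svd W U S V \<and>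
     (rank W = r \<longrightarrow> lin_indep_family (\<lambda>i. Tmat U S V (A i))) \<and>
     (rank W < r \<longrightarrow> lin_indep_family (\<lambda>i. Rmat U S V (A i))))"

end

theory Submission
  imports Defs
begin


lemma surj_lemma:
  fixes g :: "'m::finite \<Rightarrow> 'v::euclidean_space" and y :: "real^'m"
  assumes E: "subspace E"
    and LI: "\<forall>c::'m\<Rightarrow>real. (\<forall>D\<in>E. (\<Sum>i\<in>UNIV. c i * (g i \<bullet> D)) = 0) \<longrightarrow> (\<forall>i. c i = 0)"
  shows "\<exists>D\<in>E. \<forall>i. g i \<bullet> D = y $ i"
proof (rule ccontr)
  assume ny: "\<not> ?thesis"
  define \<phi> where "\<phi> = (\<lambda>D. (\<chi> i. g i \<bullet> D) :: real^'m)"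
  have lin: "linear \<phi>" unfolding \<phi>_def
    by (rule linearI) (auto simp: vec_eq_iff inner_add_right)
  have sub: "subspace (\<phi> ` E)" by (rule linear_subspace_image[OF lin E])
  have "y \<notin> \<phi> ` E" using ny by (auto simp: \<phi>_def)
  hence "span (\<phi> ` E) \<noteq> UNIV" using sub by (metis UNIV_I span_eq_iff)
  hence "dim (\<phi> ` E) < DIM(real^'m)"
    by (metis dim_eq_full dim_subset_UNIV le_neq_implies_less)
  then obtain c where c: "c \<noteq> 0" "\<And>x. x \<in> span (\<phi> ` E) \<Longrightarrow> orthogonal c x"
    by (rule orthogonal_to_subspace_exists) blast
  have "\<forall>D\<in>E. (\<Sum>i\<in>UNIV. (c$i) * (g i \<bullet> D)) = 0"
  proof
    fix D assume "D \<in> E"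
    hence "orthogonal c (\<phi> D)" using c(2) by (simp add: span_base)
    thus "(\<Sum>i\<in>UNIV. (c$i) * (g i \<bullet> D)) = 0"
      by (simp add: orthogonal_def \<phi>_def inner_vec_def)
  qed
  hence "\<forall>i. c $ i = 0" using LI[rule_format, of "\<lambda>i. c$i"] by blast
  thus False using c(1) by (simp add: vec_eq_iff)
qed



lemma farkas_lemma:
  fixes g :: "'m::finite \<Rightarrow> 'v::euclidean_space" and w :: 'v and I0 :: "'m set"
  assumes E: "subspace E"
    and LI: "\<forall>c::'m\<Rightarrow>real. (\<forall>D\<in>E. (\<Sum>i\<in>UNIV. c i * (g i \<bullet> D)) = 0) \<longrightarrow> (\<forall>i. c i = 0)"
    and H: "\<forall>D\<in>E. (\<forall>i\<in>I0. g i \<bullet> D < 0) \<longrightarrow> w \<bullet> D \<ge> 0"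
  shows "\<exists>d::'m\<Rightarrow>real. (\<forall>i. i \<notin> I0 \<longrightarrow> d i = 0) \<and> (\<forall>i\<in>I0. d i \<ge> 0) \<and>
           (\<forall>D\<in>E. w \<bullet> D + (\<Sum>i\<in>UNIV. d i * (g i \<bullet> D)) = 0)"
proof -
  have "\<forall>k. \<exists>D\<in>E. \<forall>i. g i \<bullet> D = (if i = k then 1 else 0)"
  proof
    fix k show "\<exists>D\<in>E. \<forall>i. g i \<bullet> D = (if i = k then 1 else 0)"
      using surj_lemma[OF E LI, of "axis k 1"] by (simp add: axis_def)
  qed
  then obtain Dk where Dk: "\<And>k. Dk k \<in> E" "\<And>k i. g i \<bullet> Dk k = (if i = k then 1 else 0)"
    by metis
  obtain D0 where D0: "D0 \<in> E" "\<And>i. g i \<bullet> D0 = -1"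
    using surj_lemma[OF E LI, of "\<chi> i. -1"] by auto
  have H': "w \<bullet> D \<ge> 0" if D: "D \<in> E" "\<forall>i\<in>I0. g i \<bullet> D \<le> 0" for D
  proof (rule ccontr)
    assume neg: "\<not> w \<bullet> D \<ge> 0"
    define \<epsilon> where "\<epsilon> = - (w \<bullet> D) / (2 * (\<bar>w \<bullet> D0\<bar> + 1))"
    have ep: "\<epsilon> > 0" using neg unfolding \<epsilon>_def
      by (intro divide_pos_pos) (auto simp: add_pos_nonneg)
    have "D + \<epsilon> *\<^sub>R D0 \<in> E" using D(1) D0(1) E by (simp add: subspace_add subspace_scale)
    moreover have "\<forall>i\<in>I0. g i \<bullet> (D + \<epsilon> *\<^sub>R D0) < 0"
      using D(2) D0(2) ep by (force simp: inner_add_right)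
    ultimately have ge: "w \<bullet> (D + \<epsilon> *\<^sub>R D0) \<ge> 0" using H by blast
    have "\<epsilon> * (w \<bullet> D0) \<le> \<epsilon> * \<bar>w \<bullet> D0\<bar>" using ep by (intro mult_left_mono) auto
    also have "\<dots> \<le> \<epsilon> * (\<bar>w \<bullet> D0\<bar> + 1)" using ep by (intro mult_left_mono) auto
    also have "\<dots> = - (w \<bullet> D) / 2" unfolding \<epsilon>_def by (simp add: field_simps add_pos_nonneg)
    finally have "w \<bullet> (D + \<epsilon> *\<^sub>R D0) \<le> (w \<bullet> D) / 2" by (simp add: inner_add_right)
    thus False using ge neg by linarith
  qed
  define d where "d = (\<lambda>i. - (w \<bullet> Dk i))"
  have "\<forall>i. i \<notin> I0 \<longrightarrow> d i = 0"
  proof (intro allI impI)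
    fix i assume i: "i \<notin> I0"
    have "w \<bullet> Dk i \<ge> 0" using H'[OF Dk(1), of i] i Dk(2) by force
    moreover have "w \<bullet> (- Dk i) \<ge> 0" using H'[of "- Dk i"] i Dk Dk(2) E
      by (auto simp: subspace_neg)
    ultimately show "d i = 0" by (simp add: d_def)
  qed
  moreover have "\<forall>i\<in>I0. d i \<ge> 0"
  proof
    fix i assume i: "i \<in> I0"
    have "w \<bullet> (- Dk i) \<ge> 0" using H'[of "- Dk i"] i Dk Dk(2) E
      by (auto simp: subspace_neg)
    thus "d i \<ge> 0" by (simp add: d_def)
  qed
  moreover have "\<forall>D\<in>E. w \<bullet> D + (\<Sum>i\<in>UNIV. d i * (g i \<bullet> D)) = 0"
  proof
    fix D assume D: "D \<in> E"
    define D' where "D' = D - (\<Sum>i\<in>UNIV. (g i \<bullet> D) *\<^sub>R Dk i)"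
    have D'E: "D' \<in> E" unfolding D'_def using D Dk(1) E
      by (intro subspace_diff subspace_sum subspace_scale) auto
    have gk: "g k \<bullet> D' = 0" for k
    proof -
      have "g k \<bullet> D' = g k \<bullet> D - (\<Sum>i\<in>UNIV. (g i \<bullet> D) * (g k \<bullet> Dk i))"
        by (simp add: D'_def inner_diff_right inner_sum_right)
      also have "(\<Sum>i\<in>UNIV. (g i \<bullet> D) * (g k \<bullet> Dk i)) = g k \<bullet> D"
        by (simp add: Dk(2) if_distrib cong: if_cong)
      finally show ?thesis by simp
    qed
    have "w \<bullet> D' \<ge> 0" using H'[OF D'E] gk by simp
    moreover have "w \<bullet> (- D') \<ge> 0" using H'[of "- D'"] D'E gk E by (simp add: subspace_neg)
    ultimately have "w \<bullet> D' = 0" by simp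
    thus "w \<bullet> D + (\<Sum>i\<in>UNIV. d i * (g i \<bullet> D)) = 0"
      by (simp add: D'_def d_def inner_diff_right inner_sum_right sum_negf mult.commute)
  qed
  ultimately show ?thesis by blast
qed



lemma inner_mat: "inner (M::real^'q::finite^'p::finite) N = (\<Sum>a\<in>UNIV. \<Sum>b\<in>UNIV. M$a$b * N$a$b)"
  by (simp add: inner_vec_def)

lemma sum3_swap: "(\<Sum>a\<in>A. \<Sum>b\<in>B. \<Sum>k\<in>K. f a b k) = (\<Sum>k\<in>K. \<Sum>b\<in>B. \<Sum>a\<in>A. (f a b k :: real))"
proof -
  have "(\<Sum>a\<in>A. \<Sum>b\<in>B. \<Sum>k\<in>K. f a b k) = (\<Sum>a\<in>A. \<Sum>k\<in>K. \<Sum>b\<in>B. f a b k)"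
    by (rule sum.cong[OF refl]) (rule sum.swap)
  also have "\<dots> = (\<Sum>k\<in>K. \<Sum>a\<in>A. \<Sum>b\<in>B. f a b k)" by (rule sum.swap)
  also have "\<dots> = (\<Sum>k\<in>K. \<Sum>b\<in>B. \<Sum>a\<in>A. f a b k)"
    by (rule sum.cong[OF refl]) (rule sum.swap)
  finally show ?thesis .
qed

lemma inner_mult_right:
  fixes M :: "real^'q::finite^'p::finite" and X :: "real^'k::finite^'p" and Y :: "real^'q^'k"
  shows "inner M (X ** Y) = inner (transpose X ** M) Y"
proof -
  have "inner M (X ** Y) = (\<Sum>a\<in>UNIV. \<Sum>b\<in>UNIV. \<Sum>k\<in>UNIV. M$a$b * (X$a$k * Y$k$b))"
    unfolding inner_mat matrix_matrix_mult_def by (simp add: sum_distrib_left)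
  also have "\<dots> = (\<Sum>k\<in>UNIV. \<Sum>b\<in>UNIV. \<Sum>a\<in>UNIV. M$a$b * (X$a$k * Y$k$b))"
    by (rule sum3_swap)
  also have "\<dots> = inner (transpose X ** M) Y"
    unfolding inner_mat matrix_matrix_mult_def transpose_def
    by (simp add: sum_distrib_left mult_ac)
  finally show ?thesis .
qed

lemma inner_mult_left:
  fixes M :: "real^'q::finite^'p::finite" and X :: "real^'k::finite^'p" and Y :: "real^'q^'k"
  shows "inner M (X ** Y) = inner (M ** transpose Y) X"
proof -
  have "inner M (X ** Y) = (\<Sum>a\<in>UNIV. \<Sum>b\<in>UNIV. \<Sum>k\<in>UNIV. M$a$b * (X$a$k * Y$k$b))"
    unfolding inner_mat matrix_matrix_mult_def by (simp add: sum_distrib_left)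
  also have "\<dots> = (\<Sum>a\<in>UNIV. \<Sum>k\<in>UNIV. \<Sum>b\<in>UNIV. M$a$b * (X$a$k * Y$k$b))"
    by (rule sum.cong[OF refl]) (rule sum.swap)
  also have "\<dots> = inner (M ** transpose Y) X"
    unfolding inner_mat matrix_matrix_mult_def transpose_def
    by (simp add: sum_distrib_left mult_ac)
  finally show ?thesis .
qed

lemma norm_mv_le:
  fixes A :: "real^'n::finite^'m::finite"
  shows "norm (A *v x) \<le> norm A * norm x"
proof -
  have "norm (A *v x) = L2_set (\<lambda>i. \<bar>A$i \<bullet> x\<bar>) UNIV"
    by (simp add: norm_vec_def matrix_mult_dot)
  also have "\<dots> \<le> L2_set (\<lambda>i. norm (A$i) * norm x) UNIV"
    by (rule L2_set_mono) (auto simp: Cauchy_Schwarz_ineq2)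
  also have "\<dots> = norm x * L2_set (\<lambda>i. norm (A$i)) UNIV"
    by (simp add: L2_set_right_distrib mult.commute)
  also have "\<dots> = norm A * norm x" by (simp add: norm_vec_def)
  finally show ?thesis .
qed

lemma rank_add_le:
  fixes X Y :: "real^'n::finite^'m::finite"
  shows "rank (X + Y) \<le> rank X + rank Y"
proof -
  let ?S = "range (\<lambda>x. X *v x)" and ?T = "range (\<lambda>x. Y *v x)"
  have sS: "subspace ?S" by (rule linear_subspace_image[OF _ subspace_UNIV]) (simp add: matrix_vector_mul_linear)
  have sT: "subspace ?T" by (rule linear_subspace_image[OF _ subspace_UNIV]) (simp add: matrix_vector_mul_linear)
  have "range (\<lambda>x. (X + Y) *v x) \<subseteq> {a + b |a b. a \<in> ?S \<and> b \<in> ?T}"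
    by (auto simp: matrix_vector_mult_add_rdistrib)
  hence "rank (X + Y) \<le> dim {a + b |a b. a \<in> ?S \<and> b \<in> ?T}"
    by (simp add: rank_dim_range dim_subset)
  also have "\<dots> \<le> dim ?S + dim ?T" using dim_sums_Int[OF sS sT] by linarith
  finally show ?thesis by (simp add: rank_dim_range)
qed

definition unitm :: "'p::finite \<Rightarrow> 'q::finite \<Rightarrow> real^'q^'p" where
  "unitm a0 b0 = axis a0 (axis b0 1)"

lemma inner_unitm: "inner M (unitm a0 b0) = M $ a0 $ b0"
  by (simp add: unitm_def inner_axis)

lemma rank_unitm: "rank (unitm a0 b0) \<le> 1"
proof -
  have "range (\<lambda>x. unitm a0 b0 *v x) \<subseteq> span {axis a0 1}"
  proof
    fix y assume "y \<in> range (\<lambda>x. unitm a0 b0 *v x)"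
    then obtain x where "y = unitm a0 b0 *v x" by blast
    moreover have "(unitm a0 b0 *v x) $ i = ((x $ b0) *\<^sub>R axis a0 1) $ i" for i
      by (cases "i = a0") (simp_all add: unitm_def matrix_mult_dot inner_axis' axis_def[of a0])
    ultimately have "y = (x $ b0) *\<^sub>R axis a0 1" by (simp add: vec_eq_iff)
    thus "y \<in> span {axis a0 1}" by (simp add: span_base span_mul)
  qed
  hence "rank (unitm a0 b0) \<le> dim {axis a0 (1::real)}"
    unfolding rank_dim_range by (rule dim_mono)
  thus ?thesis by simp
qed

lemma opA_add: "opA A (X + Y) = opA A X + opA A Y"
  by (simp add: opA_def vec_eq_iff inner_add_right)
lemma opA_scale: "opA A (c *\<^sub>R X) = c *\<^sub>R opA A X"
  by (simp add: opA_def vec_eq_iff)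
lemma opA_nth: "opA A X $ i = A i \<bullet> X"
  by (simp add: opA_def)

lemma inner_opA_adj: "inner M (opA_adj A lam) = (\<Sum>i\<in>UNIV. lam $ i * (A i \<bullet> M))"
  by (simp add: opA_adj_def inner_sum_right inner_commute)



lemma opt_curve:
  fixes A :: "'m::finite \<Rightarrow> real^'q::finite^'p::finite"
  assumes lm: "local_minimizer \<beta> A r W z"
    and rk: "\<forall>t>0. rank (W + t *\<^sub>R D + (t^2) *\<^sub>R K) \<le> r"
    and neg: "\<forall>i. z$i = 0 \<longrightarrow> A i \<bullet> D < 0"
  shows "W \<bullet> D \<ge> 0"
proof -
  from lm have feas: "ones + opA A W = z" and "rank W \<le> r"
    by (auto simp: local_minimizer_def feas_set_def)
  from lm obtain e where e: "e > 0" and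
    emin: "\<And>W' z'. (W', z') \<in> feas_set A r \<Longrightarrow> dist (W', z') (W, z) < e \<Longrightarrow>
        objf \<beta> W z \<le> objf \<beta> W' z'"
    unfolding local_minimizer_def by blast
  define Wt where "Wt = (\<lambda>t::real. W + t *\<^sub>R D + (t^2) *\<^sub>R K)"
  define zt where "zt = (\<lambda>t::real. ones + opA A (Wt t))"
  have zt_nth: "zt t $ i = z $ i + t * (A i \<bullet> D) + t^2 * (A i \<bullet> K)" for t i
    using feas[symmetric]
    by (simp add: zt_def Wt_def opA_add opA_scale opA_nth inner_add_right algebra_simps)
  have "((\<lambda>t. (Wt t, zt t)) \<longlongrightarrow> (W + 0 *\<^sub>R D + (0^2) *\<^sub>R K, ones + opA A (W + 0 *\<^sub>R D + (0^2) *\<^sub>R K))) (at_right 0)"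
    unfolding Wt_def zt_def opA_def
    by (intro tendsto_intros)
  hence "((\<lambda>t. (Wt t, zt t)) \<longlongrightarrow> (W, z)) (at_right 0)" using feas by simp
  hence ev1: "eventually (\<lambda>t. dist (Wt t, zt t) (W, z) < e) (at_right 0)"
    using e by (rule tendstoD)
  have evi: "eventually (\<lambda>t. (zt t $ i > 0) = (z $ i > 0)) (at_right 0)" for i
  proof -
    have lim: "((\<lambda>t. z $ i + t * (A i \<bullet> D) + t^2 * (A i \<bullet> K)) \<longlongrightarrow> z $ i + 0 * (A i \<bullet> D) + 0^2 * (A i \<bullet> K)) (at_right 0)"
      by (intro tendsto_intros)
    show ?thesis
    proof (cases "z $ i > 0")
      case True
      have "eventually (\<lambda>t. z $ i + t * (A i \<bullet> D) + t^2 * (A i \<bullet> K) > 0) (at_right 0)"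
        using lim True by (intro order_tendstoD(1)) auto
      thus ?thesis by (rule eventually_mono) (use True in \<open>auto simp: zt_nth\<close>)
    next
      case False
      show ?thesis
      proof (cases "z $ i < 0")
        case True
        have "eventually (\<lambda>t. z $ i + t * (A i \<bullet> D) + t^2 * (A i \<bullet> K) < 0) (at_right 0)"
          using lim True by (intro order_tendstoD(2)) auto
        thus ?thesis by (rule eventually_mono) (use True in \<open>auto simp: zt_nth\<close>)
      next
        case False2: False
        hence z0: "z $ i = 0" using False by simp
        have "((\<lambda>t. (A i \<bullet> D) + t * (A i \<bullet> K)) \<longlongrightarrow> (A i \<bullet> D) + 0 * (A i \<bullet> K)) (at_right 0)"
          by (intro tendsto_intros)
        hence "eventually (\<lambda>t. (A i \<bullet> D) + t * (A i \<bullet> K) < 0) (at_right 0)"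
          using neg z0 by (intro order_tendstoD(2)) auto
        moreover have "eventually (\<lambda>t. (0::real) < t) (at_right 0)" by (rule eventually_at_right_less)
        ultimately show ?thesis
        proof eventually_elim
          case (elim t)
          have "zt t $ i = t * ((A i \<bullet> D) + t * (A i \<bullet> K))"
            by (simp add: zt_nth z0 power2_eq_square algebra_simps)
          also have "\<dots> < 0" using elim by (simp add: mult_pos_neg)
          finally show ?case using z0 by simp
        qed
      qed
    qed
  qed
  hence ev2: "eventually (\<lambda>t. \<forall>i. (zt t $ i > 0) = (z $ i > 0)) (at_right 0)"
    by (simp add: eventually_all_finite)
  have ev3: "eventually (\<lambda>t. (0::real) < t) (at_right 0)" by (rule eventually_at_right_less)
  define R where "R = (\<lambda>t. D \<bullet> D + 2 * (W \<bullet> K) + 2 * t * (D \<bullet> K) + t^2 * (K \<bullet> K))"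
  have expand: "Wt t \<bullet> Wt t = W \<bullet> W + t * (2 * (W \<bullet> D) + t * R t)" for t
    by (simp add: Wt_def R_def inner_add_left inner_add_right inner_commute power2_eq_square algebra_simps)
  have ev4: "eventually (\<lambda>t. 0 \<le> 2 * (W \<bullet> D) + t * R t) (at_right 0)"
    using ev1 ev2 ev3
  proof eventually_elim
    case (elim t)
    have "(Wt t, zt t) \<in> feas_set A r" using rk elim(3)
      by (simp add: feas_set_def zt_def Wt_def)
    hence "objf \<beta> W z \<le> objf \<beta> (Wt t) (zt t)" using emin elim(1) by blast
    moreover have "pos_l0 (zt t) = pos_l0 z" using elim(2) by (simp add: pos_l0_def)
    ultimately have "W \<bullet> W \<le> Wt t \<bullet> Wt t" by (simp add: objf_def)
    hence "0 \<le> t * (2 * (W \<bullet> D) + t * R t)" by (simp add: expand)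
    thus ?case using elim(3) by (simp add: zero_le_mult_iff)
  qed
  have "((\<lambda>t. 2 * (W \<bullet> D) + t * R t) \<longlongrightarrow> 2 * (W \<bullet> D) + 0 * R 0) (at_right 0)"
    unfolding R_def by (intro tendsto_intros)
  hence "0 \<le> 2 * (W \<bullet> D) + 0 * R 0"
    using ev4 by (rule tendsto_lowerbound) simp
  thus ?thesis by simp
qed



lemma linear_PXQ: "linear (\<lambda>X::real^'q::finite^'p::finite. (P::real^'p^'k::finite) ** X ** (Q::real^'l::finite^'q))"
  by (rule linearI)
     (simp_all add: matrix_matrix_mult_def vec_eq_iff sum_distrib_left sum.distrib algebra_simps
        sum_distrib_right)

lemma PXQ_sum: "(P::real^'p^'k::finite) ** (\<Sum>i\<in>UNIV. c i *\<^sub>R (X i::real^'q::finite^'p::finite)) ** (Q::real^'l::finite^'q)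
   = (\<Sum>i\<in>UNIV. c i *\<^sub>R (P ** X i ** Q))"
  using linear_sum[OF linear_PXQ[of P Q], of "\<lambda>i. c i *\<^sub>R X i" UNIV]
    linear_scale[OF linear_PXQ[of P Q]]
  by (simp add: o_def)

lemma svd_rows:
  assumes svd: "is_svd W U S V" and M: "transpose W ** M = 0" and a: "a \<in> Gam_p S"
  shows "(transpose U ** M ** V) $ a $ c = 0"
proof -
  from svd have U: "transpose U ** U = mat 1" "U ** transpose U = mat 1"
    and V: "transpose V ** V = mat 1" "V ** transpose V = mat 1"
    and SM: "svd_middle S" and W: "W = U ** S ** transpose V"
    by (auto simp: is_svd_def orthogonal_matrix_def)
  have "transpose W = V ** transpose S ** transpose U"
    by (simp add: W matrix_transpose_mul matrix_mul_assoc)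
  hence "V ** transpose S ** transpose U ** M = 0" using M by (simp add: matrix_mul_assoc)
  hence "transpose V ** (V ** transpose S ** transpose U ** M) ** V = 0" by simp
  hence N0: "transpose S ** (transpose U ** M ** V) = 0"
    by (simp add: matrix_mul_assoc V)
  define N where "N = transpose U ** M ** V"
  from a obtain b where b: "S $ a $ b \<noteq> 0" by (auto simp: Gam_p_def)
  have col: "S $ a' $ b = 0" if "a' \<noteq> a" for a'
    using SM b that unfolding svd_middle_def by blast
  have "0 = (transpose S ** N) $ b $ c" using N0 by (simp add: N_def)
  also have "\<dots> = (\<Sum>a'\<in>UNIV. S $ a' $ b * N $ a' $ c)"
    by (simp add: matrix_matrix_mult_def transpose_def)
  also have "\<dots> = S $ a $ b * N $ a $ c"
    by (subst sum.remove[of _ a]) (auto simp: col intro!: sum.neutral)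
  finally show ?thesis using b by (simp add: N_def)
qed

lemma svd_cols:
  assumes svd: "is_svd W U S V" and M: "M ** transpose W = 0" and b: "b \<in> Gam_q S"
  shows "(transpose U ** M ** V) $ a $ b = 0"
proof -
  from svd have U: "transpose U ** U = mat 1" "U ** transpose U = mat 1"
    and V: "transpose V ** V = mat 1" "V ** transpose V = mat 1"
    and SM: "svd_middle S" and W: "W = U ** S ** transpose V"
    by (auto simp: is_svd_def orthogonal_matrix_def)
  have "transpose W = V ** transpose S ** transpose U"
    by (simp add: W matrix_transpose_mul matrix_mul_assoc)
  hence "M ** V ** transpose S ** transpose U = 0" using M by (simp add: matrix_mul_assoc)
  hence "transpose U ** (M ** V ** transpose S ** transpose U) ** U = 0" by simp
  hence N0: "(transpose U ** M ** V) ** transpose S = 0"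
    by (simp add: matrix_mul_assoc[symmetric] U)
  define N where "N = transpose U ** M ** V"
  from b obtain a' where a': "S $ a' $ b \<noteq> 0" by (auto simp: Gam_q_def)
  have row: "S $ a' $ b' = 0" if "b' \<noteq> b" for b'
    using SM a' that unfolding svd_middle_def by blast
  have "0 = (N ** transpose S) $ a $ a'" using N0 by (simp add: N_def)
  also have "\<dots> = (\<Sum>b'\<in>UNIV. N $ a $ b' * S $ a' $ b')"
    by (simp add: matrix_matrix_mult_def transpose_def)
  also have "\<dots> = N $ a $ b * S $ a' $ b"
    by (subst sum.remove[of _ b]) (auto simp: row intro!: sum.neutral)
  finally show ?thesis using a' by (simp add: N_def)
qed

lemma perp_left:
  fixes M W :: "real^'q::finite^'p::finite"
  assumes "\<forall>C::real^'p^'p. M \<bullet> (C ** W) = 0"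
  shows "M ** transpose W = 0"
  using assms[rule_format, of "M ** transpose W"] inner_mult_left[of M "M ** transpose W" W]
  by (metis inner_eq_zero_iff)

lemma perp_right:
  fixes M W :: "real^'q::finite^'p::finite"
  assumes "\<forall>B::real^'q^'q. M \<bullet> (W ** B) = 0"
  shows "transpose W ** M = 0"
  using assms[rule_format, of "transpose W ** M"] inner_mult_right[of M W "transpose W ** M"]
  by (metis inner_eq_zero_iff)

lemma licq_R:
  fixes A :: "'m::finite \<Rightarrow> real^'q::finite^'p::finite"
  assumes svd: "is_svd W U S V" and li: "lin_indep_family (\<lambda>i. Rmat U S V (A i))"
  shows "\<forall>c::'m\<Rightarrow>real. (\<forall>D\<in>{C ** W |C. True}. (\<Sum>i\<in>UNIV. c i * (A i \<bullet> D)) = 0) \<longrightarrow> (\<forall>i. c i = 0)"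
proof (rule allI, rule impI)
  fix c :: "'m \<Rightarrow> real"
  assume h: "\<forall>D\<in>{C ** W |C. True}. (\<Sum>i\<in>UNIV. c i * (A i \<bullet> D)) = 0"
  define M where "M = (\<Sum>i\<in>UNIV. c i *\<^sub>R A i)"
  have "\<forall>C::real^'p^'p. M \<bullet> (C ** W) = 0"
    using h by (auto simp: M_def inner_sum_left)
  hence MW: "M ** transpose W = 0" by (rule perp_left)
  have "(\<Sum>i\<in>UNIV. c i *\<^sub>R Rmat U S V (A i)) = 0"
  proof -
    have "(\<Sum>i\<in>UNIV. c i *\<^sub>R Rmat U S V (A i)) $ a $ b = 0" for a b
    proof (cases "b \<in> Gam_q S")
      case True
      have "(\<Sum>i\<in>UNIV. c i *\<^sub>R Rmat U S V (A i)) $ a $ b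
            = (\<Sum>i\<in>UNIV. c i *\<^sub>R (transpose U ** A i ** V)) $ a $ b"
        using True by (simp add: Rmat_def sum_component)
      also have "\<dots> = (transpose U ** M ** V) $ a $ b" by (simp add: M_def PXQ_sum)
      also have "\<dots> = 0" by (rule svd_cols[OF svd MW True])
      finally show ?thesis .
    next
      case False thus ?thesis by (simp add: Rmat_def sum_component)
    qed
    thus ?thesis by (simp add: vec_eq_iff)
  qed
  thus "\<forall>i. c i = 0" using li unfolding lin_indep_family_def by blast
qed

lemma licq_T:
  fixes A :: "'m::finite \<Rightarrow> real^'q::finite^'p::finite"
  assumes svd: "is_svd W U S V" and li: "lin_indep_family (\<lambda>i. Tmat U S V (A i))"
  shows "\<forall>c::'m\<Rightarrow>real. (\<forall>D\<in>{W ** B + C ** W |B C. True}. (\<Sum>i\<in>UNIV. c i * (A i \<bullet> D)) = 0) \<longrightarrow> (\<forall>i. c i = 0)"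
proof (rule allI, rule impI)
  fix c :: "'m \<Rightarrow> real"
  assume h: "\<forall>D\<in>{W ** B + C ** W |B C. True}. (\<Sum>i\<in>UNIV. c i * (A i \<bullet> D)) = 0"
  define M where "M = (\<Sum>i\<in>UNIV. c i *\<^sub>R A i)"
  have "\<forall>C::real^'p^'p. M \<bullet> (C ** W) = 0"
  proof
    fix C :: "real^'p^'p"
    have "W ** 0 + C ** W \<in> {W ** B + C ** W |B C. True}" by blast
    thus "M \<bullet> (C ** W) = 0" using h by (auto simp: M_def inner_sum_left)
  qed
  hence MW: "M ** transpose W = 0" by (rule perp_left)
  have "\<forall>B::real^'q^'q. M \<bullet> (W ** B) = 0"
  proof
    fix B :: "real^'q^'q"
    have "W ** B + 0 ** W \<in> {W ** B + C ** W |B C. True}" by blast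
    thus "M \<bullet> (W ** B) = 0" using h by (auto simp: M_def inner_sum_left)
  qed
  hence WM: "transpose W ** M = 0" by (rule perp_right)
  have "(\<Sum>i\<in>UNIV. c i *\<^sub>R Tmat U S V (A i)) = 0"
  proof -
    have "(\<Sum>i\<in>UNIV. c i *\<^sub>R Tmat U S V (A i)) $ a $ b = 0" for a b
    proof (cases "a \<in> Gam_p S \<or> b \<in> Gam_q S")
      case True
      have "(\<Sum>i\<in>UNIV. c i *\<^sub>R Tmat U S V (A i)) $ a $ b
            = (\<Sum>i\<in>UNIV. c i *\<^sub>R (transpose U ** A i ** V)) $ a $ b"
        using True by (simp add: Tmat_def sum_component)
      also have "\<dots> = (transpose U ** M ** V) $ a $ b" by (simp add: M_def PXQ_sum)
      also have "\<dots> = 0" using True svd_cols[OF svd MW] svd_rows[OF svd WM] by blast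
      finally show ?thesis .
    next
      case False thus ?thesis by (simp add: Tmat_def sum_component)
    qed
    thus ?thesis by (simp add: vec_eq_iff)
  qed
  thus "\<forall>i. c i = 0" using li unfolding lin_indep_family_def by blast
qed



lemma mm_add_left: "((X::real^'k::finite^'p::finite) + Y) ** (Z::real^'q::finite^'k) = X ** Z + Y ** Z"
  by (simp add: matrix_matrix_mult_def vec_eq_iff sum.distrib algebra_simps)
lemma mm_add_right: "(X::real^'k::finite^'p::finite) ** (Y + (Z::real^'q::finite^'k)) = X ** Y + X ** Z"
  by (simp add: matrix_matrix_mult_def vec_eq_iff sum.distrib algebra_simps)
lemma mm_scale_left: "(c *\<^sub>R (X::real^'k::finite^'p::finite)) ** (Z::real^'q::finite^'k) = c *\<^sub>R (X ** Z)"
  by (simp add: matrix_matrix_mult_def vec_eq_iff sum_distrib_left algebra_simps)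
lemma mm_scale_right: "(X::real^'k::finite^'p::finite) ** (c *\<^sub>R (Z::real^'q::finite^'k)) = c *\<^sub>R (X ** Z)"
  by (simp add: matrix_matrix_mult_def vec_eq_iff sum_distrib_left algebra_simps)

lemma rank_scale_le: "rank (c *\<^sub>R (X::real^'q::finite^'p::finite)) \<le> rank X"
proof -
  have "c *\<^sub>R X = (c *\<^sub>R (mat 1 :: real^'p^'p)) ** X" by (simp add: mm_scale_left)
  thus ?thesis by (metis rank_mul_le_right)
qed

lemma eps_lemma:
  fixes a b :: real
  assumes "\<forall>\<epsilon>>0. a + \<epsilon> * b \<ge> 0"
  shows "a \<ge> 0"
proof (rule ccontr)
  assume neg: "\<not> a \<ge> 0"
  define \<epsilon> where "\<epsilon> = - a / (2 * (\<bar>b\<bar> + 1))"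
  have ep: "\<epsilon> > 0" using neg unfolding \<epsilon>_def
    by (intro divide_pos_pos) (auto simp: add_pos_nonneg)
  have "\<epsilon> * b \<le> \<epsilon> * \<bar>b\<bar>" using ep by (intro mult_left_mono) auto
  also have "\<dots> \<le> \<epsilon> * (\<bar>b\<bar> + 1)" using ep by (intro mult_left_mono) auto
  also have "\<dots> = - a / 2" unfolding \<epsilon>_def by (simp add: field_simps add_pos_nonneg)
  finally show False using assms ep neg by force
qed

lemma subspace_L: "subspace {C ** (W::real^'q::finite^'p::finite) |C::real^'p^'p. True}"
  unfolding subspace_def
proof (intro conjI ballI allI)
  show "0 \<in> {C ** W |C::real^'p^'p. True}"
    by (rule CollectI, rule exI[of _ "0::real^'p^'p"]) (simp add: matrix_matrix_mult_def vec_eq_iff)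
next
  fix x y assume "x \<in> {C ** W |C::real^'p^'p. True}" "y \<in> {C ** W |C::real^'p^'p. True}"
  then obtain C1 C2 where "x = C1 ** W" "y = C2 ** W" by blast
  thus "x + y \<in> {C ** W |C::real^'p^'p. True}" by (auto simp: mm_add_left intro!: exI[of _ "C1 + C2"])
next
  fix c :: real and x assume "x \<in> {C ** W |C::real^'p^'p. True}"
  then obtain C1 where "x = C1 ** W" by blast
  thus "c *\<^sub>R x \<in> {C ** W |C::real^'p^'p. True}" by (auto simp: mm_scale_left intro!: exI[of _ "c *\<^sub>R C1"])
qed

lemma case_lt:
  fixes A :: "'m::finite \<Rightarrow> real^'q::finite^'p::finite"
  assumes lm: "local_minimizer \<beta> A r W z" and rk: "rank W < r"
    and LI: "\<forall>c::'m\<Rightarrow>real. (\<forall>D\<in>{C ** W |C. True}. (\<Sum>i\<in>UNIV. c i * (A i \<bullet> D)) = 0) \<longrightarrow> (\<forall>i. c i = 0)"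
  shows "\<exists>d::'m\<Rightarrow>real. (\<forall>i. z$i \<noteq> 0 \<longrightarrow> d i = 0) \<and> (\<forall>i. z$i = 0 \<longrightarrow> d i \<ge> 0) \<and>
     W + (\<Sum>i\<in>UNIV. d i *\<^sub>R A i) = 0"
proof -
  let ?E = "{C ** W |C::real^'p^'p. True}"
  have E: "subspace ?E" by (rule subspace_L)
  have H: "\<forall>D\<in>?E. (\<forall>i\<in>{i. z$i = 0}. A i \<bullet> D < 0) \<longrightarrow> W \<bullet> D \<ge> 0"
  proof (intro ballI impI)
    fix D assume "D \<in> ?E" and neg: "\<forall>i\<in>{i. z$i = 0}. A i \<bullet> D < 0"
    then obtain C where C: "D = C ** W" by blast
    have "rank (W + t *\<^sub>R D + (t^2) *\<^sub>R 0) \<le> r" for t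
    proof -
      have "W + t *\<^sub>R D + (t^2) *\<^sub>R 0 = (mat 1 + t *\<^sub>R C) ** W"
        by (simp add: C mm_add_left mm_scale_left)
      thus ?thesis using rank_mul_le_right[of "mat 1 + t *\<^sub>R C" W] rk by simp
    qed
    thus "W \<bullet> D \<ge> 0" using opt_curve[OF lm, of D 0] neg by auto
  qed
  obtain d where d: "\<forall>i. i \<notin> {i. z$i = 0} \<longrightarrow> d i = 0" "\<forall>i\<in>{i. z$i = 0}. d i \<ge> 0"
      "\<forall>D\<in>?E. W \<bullet> D + (\<Sum>i\<in>UNIV. d i * (A i \<bullet> D)) = 0"
    using farkas_lemma[OF E LI H] by blast
  define M where "M = W + (\<Sum>i\<in>UNIV. d i *\<^sub>R A i)"
  have Minner: "M \<bullet> X = W \<bullet> X + (\<Sum>i\<in>UNIV. d i * (A i \<bullet> X))" for X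
    by (simp add: M_def inner_add_left inner_sum_left)
  obtain D0 where D0: "D0 \<in> ?E" "\<And>i. A i \<bullet> D0 = -1"
    using surj_lemma[OF E LI, of "\<chi> i. -1"] by auto
  then obtain C0 where C0: "D0 = C0 ** W" by blast
  have "M $ a0 $ b0 = 0" for a0 b0
  proof -
    let ?N = "unitm a0 b0 :: real^'q^'p"
    obtain D1 where D1: "D1 \<in> ?E" "\<And>i. A i \<bullet> D1 = - (A i \<bullet> ?N)"
      using surj_lemma[OF E LI, of "\<chi> i. - (A i \<bullet> ?N)"] by auto
    then obtain C1 where C1: "D1 = C1 ** W" by blast
    have sgn: "\<sigma> * (W \<bullet> (D1 + ?N)) \<ge> 0" if \<sigma>: "\<sigma> = 1 \<or> \<sigma> = -1" for \<sigma> :: real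
    proof (rule eps_lemma, intro allI impI)
      fix \<epsilon> :: real assume ep: "\<epsilon> > 0"
      define G where "G = \<sigma> *\<^sub>R (D1 + ?N) + \<epsilon> *\<^sub>R D0"
      have rkG: "rank (W + t *\<^sub>R G + (t^2) *\<^sub>R 0) \<le> r" if "t > 0" for t
      proof -
        have eq: "W + t *\<^sub>R G + (t^2) *\<^sub>R 0 = (mat 1 + t *\<^sub>R (\<sigma> *\<^sub>R C1 + \<epsilon> *\<^sub>R C0)) ** W + (t * \<sigma>) *\<^sub>R ?N"
          by (simp add: G_def C1 C0 mm_add_left mm_scale_left algebra_simps)
        have "rank (W + t *\<^sub>R G + (t^2) *\<^sub>R 0) \<le> rank W + 1"
          unfolding eq using rank_add_le[of "(mat 1 + t *\<^sub>R (\<sigma> *\<^sub>R C1 + \<epsilon> *\<^sub>R C0)) ** W" "(t * \<sigma>) *\<^sub>R ?N"]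
            rank_mul_le_right[of "mat 1 + t *\<^sub>R (\<sigma> *\<^sub>R C1 + \<epsilon> *\<^sub>R C0)" W]
            rank_scale_le[of "t * \<sigma>" ?N] rank_unitm[of a0 b0] by linarith
        thus ?thesis using rk by linarith
      qed
      have "A i \<bullet> G < 0" for i
        using ep by (simp add: G_def inner_add_right D1(2) D0(2))
      hence "W \<bullet> G \<ge> 0" using opt_curve[OF lm, of G 0] rkG by auto
      thus "\<sigma> * (W \<bullet> (D1 + ?N)) + \<epsilon> * (W \<bullet> D0) \<ge> 0"
        by (simp add: G_def inner_add_right)
    qed
    have "W \<bullet> (D1 + ?N) = 0" using sgn[of 1] sgn[of "-1"] by simp
    moreover have "(\<Sum>i\<in>UNIV. d i * (A i \<bullet> (D1 + ?N))) = 0"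
      by (simp add: inner_add_right D1(2))
    ultimately have "M \<bullet> (D1 + ?N) = 0" by (simp add: Minner)
    moreover have "M \<bullet> D1 = 0" using d(3) D1(1) Minner by auto
    ultimately have "M \<bullet> ?N = 0" by (simp add: inner_add_right)
    thus ?thesis by (simp add: inner_unitm)
  qed
  hence "M = 0" by (simp add: vec_eq_iff)
  thus ?thesis using d unfolding M_def by (intro exI[of _ d]) auto
qed



lemma mv_adj: "((A::real^'n::finite^'m::finite) *v x) \<bullet> y = x \<bullet> (transpose A *v y)"
  by (metis dot_lmul_matrix inner_commute transpose_matrix_vector)

lemma norm_transpose: "norm (transpose (A::real^'n::finite^'m::finite)) = norm A"
proof -
  have "transpose A \<bullet> transpose A = A \<bullet> A"
    unfolding inner_mat transpose_def by (simp add: sum.swap[of _ "UNIV::'n set"])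
  thus ?thesis by (simp add: norm_eq_sqrt_inner)
qed

lemma transpose_diff: "transpose ((A::real^'n::finite^'m::finite) - B) = transpose A - transpose B"
  by (simp add: transpose_def vec_eq_iff)

lemma kernel_bound:
  fixes W :: "real^'q::finite^'p::finite"
  obtains c where "c > 0" and
    "\<And>u v W'. transpose W *v u = 0 \<Longrightarrow> W *v v = 0 \<Longrightarrow> rank W' \<le> rank W \<Longrightarrow> norm (W' - W) \<le> c / 2 \<Longrightarrow>
       \<bar>u \<bullet> ((W' - W) *v v)\<bar> \<le> 2 * norm u * norm v * (norm (W' - W))^2 / c"
proof -
  let ?R = "range (\<lambda>x. W *v x)"
  have subR: "subspace ?R" by (rule linear_subspace_image[OF _ subspace_UNIV]) (simp add: matrix_vector_mul_linear)
  have clR: "closed ?R" by (rule closed_subspace[OF subR])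
  have inj: "\<forall>y\<in>?R. transpose W *v y = 0 \<longrightarrow> y = 0"
  proof (intro ballI impI)
    fix y assume "y \<in> ?R" "transpose W *v y = 0"
    then obtain w where w: "y = W *v w" by blast
    have "y \<bullet> y = w \<bullet> (transpose W *v y)" using w by (simp add: mv_adj)
    thus "y = 0" using \<open>transpose W *v y = 0\<close> by simp
  qed
  obtain c where c: "c > 0" and cb: "\<And>y. y \<in> ?R \<Longrightarrow> norm (transpose W *v y) \<ge> c * norm y"
    using injective_imp_isometric[OF clR subR matrix_vector_mul_bounded_linear inj] by blast
  show ?thesis
  proof (rule that[OF c])
    fix u v W' assume u: "transpose W *v u = 0" and v: "W *v v = 0" and rk: "rank W' \<le> rank W"
      and small: "norm (W' - W) \<le> c / 2"
    define \<Delta> where "\<Delta> = W' - W"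
    show "\<bar>u \<bullet> ((W' - W) *v v)\<bar> \<le> 2 * norm u * norm v * (norm (W' - W))^2 / c"
    proof (cases "u = 0")
      case True thus ?thesis by simp
    next
      case False
      have unR: "u \<notin> ?R"
      proof
        assume "u \<in> ?R"
        then obtain w where w: "u = W *v w" by blast
        have "u \<bullet> u = w \<bullet> (transpose W *v u)" using w by (simp add: mv_adj)
        thus False using u False by simp
      qed
      have spanR: "span ?R = ?R" using subR by (rule span_eq_iff[THEN iffD2])
      let ?X = "insert u ?R"
      have unS: "u \<notin> span ?R" using unR spanR by metis
      have dimX: "dim ?X = rank W + 1"
        unfolding dim_insert rank_dim_range using unS by simp
      let ?g = "\<lambda>x. transpose W' *v x"
      have lin_g: "linear ?g" by (rule matrix_vector_mul_linear)
      have "dim (?g ` ?X) \<le> dim (range ?g)" by (rule dim_subset) auto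
      also have "\<dots> = rank W'" by (simp only: rank_dim_range[symmetric] rank_transpose)
      finally have dimg: "dim (?g ` ?X) \<le> rank W" using rk by linarith
      have "\<not> inj_on ?g (span ?X)"
      proof
        assume "inj_on ?g (span ?X)"
        hence "dim (?g ` ?X) = dim ?X" by (rule dim_image_eq[OF lin_g])
        thus False using dimX dimg by linarith
      qed
      then obtain x1 x2 where x12: "x1 \<in> span ?X" "x2 \<in> span ?X" "x1 \<noteq> x2" "?g x1 = ?g x2"
        unfolding inj_on_def by blast
      define x where "x = x1 - x2"
      have xX: "x \<in> span ?X" using x12 by (simp add: x_def span_diff)
      have x0: "x \<noteq> 0" using x12 by (simp add: x_def)
      have gx: "transpose W' *v x = 0" using x12 by (simp add: x_def matrix_vector_mult_diff_distrib)
      from xX obtain \<alpha> where "x - \<alpha> *\<^sub>R u \<in> span ?R" by (auto simp: span_breakdown_eq)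
      hence yR: "x - \<alpha> *\<^sub>R u \<in> ?R" using spanR by simp
      define y where "y = x - \<alpha> *\<^sub>R u"
      have xy: "x = y + \<alpha> *\<^sub>R u" by (simp add: y_def)
      have W'eq: "W' = W + \<Delta>" by (simp add: \<Delta>_def)
      have tW': "transpose W' = transpose W + transpose \<Delta>"
        by (simp add: W'eq transpose_def vec_eq_iff)
      have "transpose W *v x = transpose W *v y + \<alpha> *\<^sub>R (transpose W *v u)"
        unfolding xy by (simp only: matrix_vector_right_distrib matrix_vector_mult_scaleR)
      hence Wx: "transpose W *v x = transpose W *v y" by (simp only: u scaleR_zero_right add_0_right)
      have "transpose W' *v x = transpose W *v y + transpose \<Delta> *v x"
        unfolding tW' matrix_vector_mult_add_rdistrib Wx ..
      hence eq1: "transpose W *v y = - (transpose \<Delta> *v x)" using gx by (simp add: eq_neg_iff_add_eq_0)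
      have "c * norm y \<le> norm (transpose W *v y)" using cb yR by (simp add: y_def)
      also have "\<dots> = norm (transpose \<Delta> *v x)" by (simp only: eq1 norm_minus_cancel)
      also have "\<dots> \<le> norm \<Delta> * norm x" using norm_mv_le[of "transpose \<Delta>" x] by (simp add: norm_transpose)
      finally have ybound: "c * norm y \<le> norm \<Delta> * norm x" .
      have "norm \<Delta> * norm x \<le> (c / 2) * norm x"
        using small by (intro mult_right_mono) (auto simp: \<Delta>_def)
      moreover have "(c / 2) * norm x = c * (norm x / 2)" by simp
      ultimately have "c * norm y \<le> c * (norm x / 2)" using ybound by linarith
      hence yhalf: "norm y \<le> norm x / 2" using c by (rule mult_left_le_imp_le)
      have "norm x \<le> norm y + norm (\<alpha> *\<^sub>R u)" using xy norm_triangle_ineq by metis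
      hence xa: "norm x \<le> 2 * (\<bar>\<alpha>\<bar> * norm u)" using yhalf by simp
      have "v \<bullet> (transpose W' *v x) = (W' *v v) \<bullet> x" by (simp add: mv_adj)
      also have "W' *v v = \<Delta> *v v" by (simp add: W'eq matrix_vector_mult_add_rdistrib v)
      finally have "(\<Delta> *v v) \<bullet> y + \<alpha> * ((\<Delta> *v v) \<bullet> u) = 0"
        using gx by (simp add: xy inner_add_right)
      hence "\<bar>\<alpha>\<bar> * \<bar>u \<bullet> (\<Delta> *v v)\<bar> = \<bar>(\<Delta> *v v) \<bullet> y\<bar>"
        by (simp add: inner_commute abs_mult eq_neg_iff_add_eq_0[symmetric] abs_minus_cancel)
      also have "\<dots> \<le> norm (\<Delta> *v v) * norm y" by (rule Cauchy_Schwarz_ineq2)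
      also have "\<dots> \<le> (norm \<Delta> * norm v) * (norm \<Delta> * norm x / c)"
        using ybound c by (intro mult_mono norm_mv_le) (auto simp: field_simps)
      also have "\<dots> \<le> (norm \<Delta> * norm v) * (norm \<Delta> * (2 * (\<bar>\<alpha>\<bar> * norm u)) / c)"
        using xa c by (intro mult_left_mono divide_right_mono) auto
      also have "\<dots> = \<bar>\<alpha>\<bar> * (2 * norm u * norm v * (norm \<Delta>)^2 / c)"
        by (simp add: power2_eq_square field_simps)
      finally have main: "\<bar>\<alpha>\<bar> * \<bar>u \<bullet> (\<Delta> *v v)\<bar> \<le> \<bar>\<alpha>\<bar> * (2 * norm u * norm v * (norm \<Delta>)^2 / c)" .
      have "\<alpha> \<noteq> 0"
      proof
        assume "\<alpha> = 0"
        hence "norm x \<le> 0" using xa by simp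
        thus False using x0 by simp
      qed
      hence "\<bar>\<alpha>\<bar> > 0" by simp
      hence "\<bar>u \<bullet> (\<Delta> *v v)\<bar> \<le> 2 * norm u * norm v * (norm \<Delta>)^2 / c"
        using main by (rule mult_left_le_imp_le[rotated])
      thus ?thesis by (simp add: \<Delta>_def)
    qed
  qed
qed



lemma mv_col: "(A::real^'n::finite^'m::finite) *v (\<chi> k. (B::real^'l::finite^'n) $ k $ a) = (\<chi> k. (A ** B) $ k $ a)"
  by (simp add: matrix_vector_mult_def matrix_matrix_mult_def)

lemma geo:
  fixes W M :: "real^'q::finite^'p::finite"
  assumes svd: "is_svd W U S V" and WM: "transpose W ** M = 0" and MW: "M ** transpose W = 0"
  shows "\<exists>K\<ge>0. \<exists>c>0. \<forall>W'. rank W' \<le> rank W \<longrightarrow> norm (W' - W) \<le> c / 2 \<longrightarrow>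
            \<bar>M \<bullet> (W' - W)\<bar> \<le> K * (norm (W' - W))^2"
proof -
  from svd have U: "transpose U ** U = mat 1" "U ** transpose U = mat 1"
    and V: "transpose V ** V = mat 1" "V ** transpose V = mat 1"
    and SM: "svd_middle S" and W: "W = U ** S ** transpose V"
    by (auto simp: is_svd_def orthogonal_matrix_def)
  obtain c where c: "c > 0" and kb: "\<And>u v W'. transpose W *v u = 0 \<Longrightarrow> W *v v = 0 \<Longrightarrow> rank W' \<le> rank W \<Longrightarrow>
       norm (W' - W) \<le> c / 2 \<Longrightarrow> \<bar>u \<bullet> ((W' - W) *v v)\<bar> \<le> 2 * norm u * norm v * (norm (W' - W))^2 / c"
    by (rule kernel_bound[of W]) blast
  define N where "N = transpose U ** M ** V"
  define ua where "ua = (\<lambda>a. (\<chi> k. U $ k $ a) :: real^'p)"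
  define vb where "vb = (\<lambda>b. (\<chi> k. V $ k $ b) :: real^'q)"
  have MN: "M = U ** N ** transpose V"
  proof -
    have "U ** N ** transpose V = (U ** transpose U) ** M ** (V ** transpose V)"
      by (simp add: N_def matrix_mul_assoc)
    thus ?thesis by (simp add: U V)
  qed
  have WtU: "transpose W ** U = V ** transpose S"
  proof -
    have "transpose W ** U = V ** transpose S ** (transpose U ** U)"
      by (simp add: W matrix_transpose_mul matrix_mul_assoc)
    thus ?thesis by (simp add: U)
  qed
  have WV: "W ** V = U ** S"
  proof -
    have "W ** V = U ** S ** (transpose V ** V)"
      by (simp add: W matrix_mul_assoc)
    thus ?thesis by (simp add: V)
  qed
  have ua0: "transpose W *v ua a = 0" if "a \<notin> Gam_p S" for a
  proof -
    have "transpose W *v ua a = (\<chi> k. (V ** transpose S) $ k $ a)" by (simp add: ua_def mv_col WtU)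
    also have "\<dots> = 0" using that
      by (simp add: vec_eq_iff matrix_matrix_mult_def transpose_def Gam_p_def)
    finally show ?thesis .
  qed
  have vb0: "W *v vb b = 0" if "b \<notin> Gam_q S" for b
  proof -
    have "W *v vb b = (\<chi> k. (U ** S) $ k $ b)" by (simp add: vb_def mv_col WV)
    also have "\<dots> = 0" using that
      by (simp add: vec_eq_iff matrix_matrix_mult_def Gam_q_def)
    finally show ?thesis .
  qed
  have Nz: "N $ a $ b = 0" if "a \<in> Gam_p S \<or> b \<in> Gam_q S" for a b
    using that svd_rows[OF svd WM] svd_cols[OF svd MW] by (auto simp: N_def)
  define K where "K = (\<Sum>a\<in>UNIV. \<Sum>b\<in>UNIV. \<bar>N $ a $ b\<bar> * (2 * norm (ua a) * norm (vb b) / c))"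
  have K0: "K \<ge> 0" unfolding K_def using c by (intro sum_nonneg) auto
  have entry: "(transpose U ** X ** V) $ a $ b = ua a \<bullet> (X *v vb b)" for X a b
    by (simp add: ua_def vb_def matrix_matrix_mult_def matrix_vector_mult_def inner_vec_def
        transpose_def sum_distrib_left mult_ac sum.swap[of _ "UNIV::'q set"])
  have "\<forall>W'. rank W' \<le> rank W \<longrightarrow> norm (W' - W) \<le> c / 2 \<longrightarrow> \<bar>M \<bullet> (W' - W)\<bar> \<le> K * (norm (W' - W))^2"
  proof (intro allI impI)
    fix W' assume rk: "rank W' \<le> rank W" and sm: "norm (W' - W) \<le> c / 2"
    define \<Delta> where "\<Delta> = W' - W"
    have "M \<bullet> \<Delta> = \<Delta> \<bullet> (U ** (N ** transpose V))" by (simp add: MN matrix_mul_assoc inner_commute)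
    also have "\<dots> = (transpose U ** \<Delta>) \<bullet> (N ** transpose V)" by (rule inner_mult_right)
    also have "\<dots> = (transpose U ** \<Delta> ** V) \<bullet> N" by (simp add: inner_mult_left)
    also have "\<dots> = (\<Sum>a\<in>UNIV. \<Sum>b\<in>UNIV. N $ a $ b * (ua a \<bullet> (\<Delta> *v vb b)))"
      by (simp add: inner_mat entry mult.commute)
    finally have eqM: "M \<bullet> \<Delta> = (\<Sum>a\<in>UNIV. \<Sum>b\<in>UNIV. N $ a $ b * (ua a \<bullet> (\<Delta> *v vb b)))" .
    have trm: "\<bar>N $ a $ b * (ua a \<bullet> (\<Delta> *v vb b))\<bar> \<le> \<bar>N $ a $ b\<bar> * (2 * norm (ua a) * norm (vb b) / c) * (norm \<Delta>)^2"
      for a b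
    proof (cases "a \<in> Gam_p S \<or> b \<in> Gam_q S")
      case True thus ?thesis using Nz[OF True] by simp
    next
      case False
      have "\<bar>ua a \<bullet> (\<Delta> *v vb b)\<bar> \<le> 2 * norm (ua a) * norm (vb b) * (norm \<Delta>)^2 / c"
        using kb[OF ua0 vb0 rk sm] False by (simp add: \<Delta>_def)
      hence "\<bar>N $ a $ b\<bar> * \<bar>ua a \<bullet> (\<Delta> *v vb b)\<bar> \<le> \<bar>N $ a $ b\<bar> * (2 * norm (ua a) * norm (vb b) * (norm \<Delta>)^2 / c)"
        by (rule mult_left_mono) simp
      thus ?thesis by (simp add: abs_mult field_simps)
    qed
    have "\<bar>M \<bullet> \<Delta>\<bar> \<le> (\<Sum>a\<in>UNIV. \<Sum>b\<in>UNIV. \<bar>N $ a $ b * (ua a \<bullet> (\<Delta> *v vb b))\<bar>)"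
      unfolding eqM by (rule order_trans[OF sum_abs sum_mono]) (rule sum_abs)
    also have "\<dots> \<le> (\<Sum>a\<in>UNIV. \<Sum>b\<in>UNIV. \<bar>N $ a $ b\<bar> * (2 * norm (ua a) * norm (vb b) / c) * (norm \<Delta>)^2)"
      by (intro sum_mono trm)
    also have "\<dots> = K * (norm \<Delta>)^2" by (simp add: K_def sum_distrib_right)
    finally show "\<bar>M \<bullet> (W' - W)\<bar> \<le> K * (norm (W' - W))^2" by (simp add: \<Delta>_def)
  qed
  thus ?thesis using K0 c by blast
qed



lemma subspace_T: "subspace {(W::real^'q::finite^'p::finite) ** B + C ** W |(B::real^'q^'q) (C::real^'p^'p). True}"
  unfolding subspace_def
proof (intro conjI ballI allI)
  show "0 \<in> {W ** B + C ** W |(B::real^'q^'q) (C::real^'p^'p). True}"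
    by (rule CollectI, rule exI[of _ "0::real^'q^'q"], rule exI[of _ "0::real^'p^'p"])
       (simp add: matrix_matrix_mult_def vec_eq_iff)
next
  fix x y assume "x \<in> {W ** B + C ** W |(B::real^'q^'q) (C::real^'p^'p). True}"
    "y \<in> {W ** B + C ** W |(B::real^'q^'q) (C::real^'p^'p). True}"
  then obtain B1 C1 B2 C2 where "x = W ** B1 + C1 ** W" "y = W ** B2 + C2 ** W" by blast
  thus "x + y \<in> {W ** B + C ** W |(B::real^'q^'q) (C::real^'p^'p). True}"
    by (auto simp: mm_add_left mm_add_right algebra_simps intro!: exI[of _ "B1 + B2"] exI[of _ "C1 + C2"])
next
  fix c :: real and x assume "x \<in> {W ** B + C ** W |(B::real^'q^'q) (C::real^'p^'p). True}"
  then obtain B1 C1 where "x = W ** B1 + C1 ** W" by blast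
  thus "c *\<^sub>R x \<in> {W ** B + C ** W |(B::real^'q^'q) (C::real^'p^'p). True}"
    by (auto simp: mm_scale_left mm_scale_right scaleR_add_right intro!: exI[of _ "c *\<^sub>R B1"] exI[of _ "c *\<^sub>R C1"])
qed

lemma case_eq:
  fixes A :: "'m::finite \<Rightarrow> real^'q::finite^'p::finite"
  assumes lm: "local_minimizer \<beta> A r W z" and rk: "rank W = r"
    and LI: "\<forall>c::'m\<Rightarrow>real. (\<forall>D\<in>{W ** B + C ** W |(B::real^'q^'q) (C::real^'p^'p). True}. (\<Sum>i\<in>UNIV. c i * (A i \<bullet> D)) = 0) \<longrightarrow> (\<forall>i. c i = 0)"
  shows "\<exists>d::'m\<Rightarrow>real. (\<forall>i. z$i \<noteq> 0 \<longrightarrow> d i = 0) \<and> (\<forall>i. z$i = 0 \<longrightarrow> d i \<ge> 0) \<and>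
     transpose W ** (W + (\<Sum>i\<in>UNIV. d i *\<^sub>R A i)) = 0 \<and> (W + (\<Sum>i\<in>UNIV. d i *\<^sub>R A i)) ** transpose W = 0"
proof -
  let ?E = "{W ** B + C ** W |(B::real^'q^'q) (C::real^'p^'p). True}"
  have E: "subspace ?E" by (rule subspace_T)
  have H: "\<forall>D\<in>?E. (\<forall>i\<in>{i. z$i = 0}. A i \<bullet> D < 0) \<longrightarrow> W \<bullet> D \<ge> 0"
  proof (intro ballI impI)
    fix D assume "D \<in> ?E" and neg: "\<forall>i\<in>{i. z$i = 0}. A i \<bullet> D < 0"
    then obtain B C where BC: "D = W ** B + C ** W" by blast
    have "rank (W + t *\<^sub>R D + (t^2) *\<^sub>R (C ** W ** B)) \<le> r" for t
    proof -
      have "W + t *\<^sub>R D + (t^2) *\<^sub>R (C ** W ** B) = (mat 1 + t *\<^sub>R C) ** W ** (mat 1 + t *\<^sub>R B)"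
        by (simp add: BC mm_add_left mm_add_right mm_scale_left mm_scale_right matrix_mul_assoc
             power2_eq_square algebra_simps)
      thus ?thesis using rank_mul_le_left[of "(mat 1 + t *\<^sub>R C) ** W" "mat 1 + t *\<^sub>R B"]
          rank_mul_le_right[of "mat 1 + t *\<^sub>R C" W] rk by simp
    qed
    thus "W \<bullet> D \<ge> 0" using opt_curve[OF lm, of D "C ** W ** B"] neg by auto
  qed
  obtain d where d: "\<forall>i. i \<notin> {i. z$i = 0} \<longrightarrow> d i = 0" "\<forall>i\<in>{i. z$i = 0}. d i \<ge> 0"
      "\<forall>D\<in>?E. W \<bullet> D + (\<Sum>i\<in>UNIV. d i * (A i \<bullet> D)) = 0"
    using farkas_lemma[OF E LI H] by blast
  define M where "M = W + (\<Sum>i\<in>UNIV. d i *\<^sub>R A i)"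
  have Minner: "M \<bullet> X = W \<bullet> X + (\<Sum>i\<in>UNIV. d i * (A i \<bullet> X))" for X
    by (simp add: M_def inner_add_left inner_sum_left)
  have "\<forall>C::real^'p^'p. M \<bullet> (C ** W) = 0"
  proof
    fix C :: "real^'p^'p"
    have "C ** W = W ** 0 + C ** W" by (simp add: matrix_matrix_mult_def vec_eq_iff)
    hence "C ** W \<in> ?E" by blast
    thus "M \<bullet> (C ** W) = 0" using d(3) Minner by auto
  qed
  hence MW: "M ** transpose W = 0" by (rule perp_left)
  have "\<forall>B::real^'q^'q. M \<bullet> (W ** B) = 0"
  proof
    fix B :: "real^'q^'q"
    have "W ** B = W ** B + 0 ** W" by (simp add: matrix_matrix_mult_def vec_eq_iff)
    hence "W ** B \<in> ?E" by blast
    thus "M \<bullet> (W ** B) = 0" using d(3) Minner by auto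
  qed
  hence WM: "transpose W ** M = 0" by (rule perp_right)
  show ?thesis using d MW WM unfolding M_def by (intro exI[of _ d]) auto
qed

lemma normal_from_bound:
  fixes A :: "'m::finite \<Rightarrow> real^'q::finite^'p::finite"
  assumes K: "K \<ge> 0" and c: "c > 0"
    and bd: "\<forall>W'. rank W' \<le> r \<longrightarrow> norm (W' - W) \<le> c / 2 \<longrightarrow> \<bar>M \<bullet> (W' - W)\<bar> \<le> K * (norm (W' - W))^2"
  shows "(- M, 0) \<in> reg_normal_cone (feas_set A r) (W, z)"
  unfolding reg_normal_cone_def
proof (intro CollectI allI impI)
  fix \<epsilon> :: real assume ep: "\<epsilon> > 0"
  define \<delta> where "\<delta> = min (c / 2) (\<epsilon> / (K + 1))"
  have dp: "\<delta> > 0" using ep c K by (simp add: \<delta>_def)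
  show "\<exists>\<delta>>0. \<forall>x'\<in>feas_set A r. x' \<noteq> (W, z) \<and> dist x' (W, z) < \<delta> \<longrightarrow>
          (- M, 0) \<bullet> (x' - (W, z)) / norm (x' - (W, z)) \<le> \<epsilon>"
  proof (intro exI[of _ \<delta>] conjI ballI impI)
    show "\<delta> > 0" by (rule dp)
    fix x' assume x'F: "x' \<in> feas_set A r" and h: "x' \<noteq> (W, z) \<and> dist x' (W, z) < \<delta>"
    obtain W' z' where x': "x' = (W', z')" by (cases x')
    have rk': "rank W' \<le> r" using x'F x' by (simp add: feas_set_def)
    define n where "n = norm (x' - (W, z))"
    have npos: "n > 0" using h by (simp add: n_def)
    have nd: "n < \<delta>" using h by (simp add: n_def dist_norm)
    have Dn: "norm (W' - W) \<le> n"
      unfolding n_def x' using norm_fst_le[of "W' - W" "z' - z"] by simp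
    have Dd: "norm (W' - W) \<le> c / 2" using Dn nd by (simp add: \<delta>_def)
    have "(- M, 0) \<bullet> (x' - (W, z)) = - (M \<bullet> (W' - W))" by (simp add: x')
    also have "\<dots> \<le> \<bar>M \<bullet> (W' - W)\<bar>" by simp
    also have "\<dots> \<le> K * (norm (W' - W))^2" using bd rk' Dd by blast
    also have "\<dots> = (K * norm (W' - W)) * norm (W' - W)" by (simp add: power2_eq_square)
    also have "\<dots> \<le> \<epsilon> * n"
    proof (rule mult_mono)
      have "K * norm (W' - W) \<le> K * \<delta>" using Dn nd K by (intro mult_left_mono) auto
      also have "\<dots> \<le> K * (\<epsilon> / (K + 1))" using K by (intro mult_left_mono) (auto simp: \<delta>_def)
      also have "\<dots> \<le> \<epsilon>" using K ep by (simp add: field_simps)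
      finally show "K * norm (W' - W) \<le> \<epsilon>" .
    qed (use Dn ep in auto)
    finally show "(- M, 0) \<bullet> (x' - (W, z)) / norm (x' - (W, z)) \<le> \<epsilon>"
      using npos by (simp add: n_def pos_divide_le_eq)
  qed
qed



theorem theorem1:
  fixes \<beta> :: real and r :: nat
    and A :: "'m::finite \<Rightarrow> real^'q::finite^'p::finite"
    and W :: "real^'q^'p" and z :: "real^'m"
  assumes "\<beta> > 0"
    and "0 < r" and "r < min CARD('p) CARD('q)"
    and "local_minimizer \<beta> A r W z"
    and "assumption1 A r W"
  shows "KKT_point \<beta> A r W z"
proof -
  note bp = assms(1) and lm = assms(4)
  from lm have feas: "ones + opA A W = z" and rkW: "rank W \<le> r"
    by (auto simp: local_minimizer_def feas_set_def)
  from assms(5) obtain U S V where svd: "is_svd W U S V"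
    and liT: "rank W = r \<longrightarrow> lin_indep_family (\<lambda>i. Tmat U S V (A i))"
    and liR: "rank W < r \<longrightarrow> lin_indep_family (\<lambda>i. Rmat U S V (A i))"
    unfolding assumption1_def by blast
  obtain d :: "'m \<Rightarrow> real" where d: "\<forall>i. z$i \<noteq> 0 \<longrightarrow> d i = 0" "\<forall>i. z$i = 0 \<longrightarrow> d i \<ge> 0"
    and nc: "(- (W + (\<Sum>i\<in>UNIV. d i *\<^sub>R A i)), 0) \<in> reg_normal_cone (feas_set A r) (W, z)"
  proof (cases "rank W = r")
    case True
    obtain d :: "'m \<Rightarrow> real" where d: "\<forall>i. z$i \<noteq> 0 \<longrightarrow> d i = 0" "\<forall>i. z$i = 0 \<longrightarrow> d i \<ge> 0"
      and WM: "transpose W ** (W + (\<Sum>i\<in>UNIV. d i *\<^sub>R A i)) = 0"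
      and MW: "(W + (\<Sum>i\<in>UNIV. d i *\<^sub>R A i)) ** transpose W = 0"
      using case_eq[OF lm True licq_T[OF svd liT[rule_format, OF True]]] by blast
    obtain K c where K: "K \<ge> 0" "c > 0" and bd: "\<forall>W'. rank W' \<le> rank W \<longrightarrow> norm (W' - W) \<le> c / 2 \<longrightarrow>
        \<bar>(W + (\<Sum>i\<in>UNIV. d i *\<^sub>R A i)) \<bullet> (W' - W)\<bar> \<le> K * (norm (W' - W))^2"
      using geo[OF svd WM MW] by blast
    show ?thesis
      by (rule that[OF d]) (rule normal_from_bound[OF K], use bd True in simp)
  next
    case False
    hence lt: "rank W < r" using rkW by simp
    obtain d :: "'m \<Rightarrow> real" where d: "\<forall>i. z$i \<noteq> 0 \<longrightarrow> d i = 0" "\<forall>i. z$i = 0 \<longrightarrow> d i \<ge> 0"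
      and M0: "W + (\<Sum>i\<in>UNIV. d i *\<^sub>R A i) = 0"
      using case_lt[OF lm lt licq_R[OF svd liR[rule_format, OF lt]]] by blast
    have "(- (W + (\<Sum>i\<in>UNIV. d i *\<^sub>R A i)), 0) \<in> reg_normal_cone (feas_set A r) (W, z)"
      unfolding M0 reg_normal_cone_def by (auto intro: exI[of _ 1])
    thus ?thesis by (rule that[OF d])
  qed
  define lam :: "real^'m" where "lam = (\<chi> i. d i)"
  define dd :: "real^'m" where "dd = (\<chi> i. d i / \<beta>)"
  have dd_sub: "dd \<in> subdiff_pos_l0 z"
    using d bp by (auto simp: subdiff_pos_l0_def dd_def)
  have adj: "opA_adj A lam = (\<Sum>i\<in>UNIV. d i *\<^sub>R A i)" by (simp add: opA_adj_def lam_def)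
  have sec: "\<beta> *\<^sub>R dd - lam = 0" using bp by (simp add: dd_def lam_def vec_eq_iff)
  have eqv: "- (W + opA_adj A lam, \<beta> *\<^sub>R dd - lam) = (- (W + (\<Sum>i\<in>UNIV. d i *\<^sub>R A i)), 0)"
    unfolding adj sec by simp
  have "- (W + opA_adj A lam, \<beta> *\<^sub>R dd - lam) \<in> reg_normal_cone (feas_set A r) (W, z)"
    unfolding eqv by (rule nc)
  hence "\<exists>lam::real^'m. \<exists>d \<in> subdiff_pos_l0 z.
        - (W + opA_adj A lam, \<beta> *\<^sub>R d - lam) \<in> reg_normal_cone (feas_set A r) (W, z)"
    using dd_sub by blast
  thus ?thesis unfolding KKT_point_def using rkW feas by auto
qed

end
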